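(* Let $\tau$ be an infinite cardinal and let $\mathcal U$ be a uniformity on a space $X$ with $w(\mathcal U)\le\tau$. There is no continuous and effective action on $X$ of a topological group $G$ with $\psi(G)>\tau$ for which $\mathcal U$ is an equiuniformity on $X$.
   Context: All spaces are Tychonoff. Uniformities are families of open covers; $w(\mathcal U)$ is the least cardinality of a base. For a continuous action of $G$ on $X$, $\mathcal U$ is an equiuniformity if it is saturated ($gu\in\mathcal U$ for $g\in G,u\in\mathcal U$) and bounded (for each $u\in\mathcal U$ there exist a neighborhood $O$ of the unit and $v\in\mathcal U$ with $\{OV:V\in v\}$ refining $u$). An action is effective if only the unit fixes every point. $\psi(G)$ is the pseudocharacter of $G$. *)

theory Defs
  imports "HOL-Analysis.Analysis" "HOL-Algebra.Group"
begin

definition tychonoff_space :: "'a topology \<Rightarrow> bool" where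
  "tychonoff_space X \<longleftrightarrow> t1_space X \<and> completely_regular_space X"

definition open_cover :: "'a topology \<Rightarrow> 'a set set \<Rightarrow> bool" where
  "open_cover X u \<longleftrightarrow> (\<forall>U\<in>u. openin X U) \<and> \<Union>u = topspace X"

definition refines :: "'a set set \<Rightarrow> 'a set set \<Rightarrow> bool" where
  "refines v u \<longleftrightarrow> (\<forall>V\<in>v. \<exists>U\<in>u. V \<subseteq> U)"

definition cover_star :: "'a set \<Rightarrow> 'a set set \<Rightarrow> 'a set" where
  "cover_star A u = \<Union>{U\<in>u. U \<inter> A \<noteq> {}}"

definition star_refines :: "'a set set \<Rightarrow> 'a set set \<Rightarrow> bool" where
  "star_refines v u \<longleftrightarrow> (\<forall>V\<in>v. \<exists>U\<in>u. cover_star V v \<subseteq> U)"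

definition cover_uniformity :: "'a topology \<Rightarrow> 'a set set set \<Rightarrow> bool" where
  "cover_uniformity X \<U> \<longleftrightarrow>
     \<U> \<noteq> {} \<and>
     (\<forall>u\<in>\<U>. open_cover X u) \<and>
     (\<forall>u\<in>\<U>. \<forall>v. open_cover X v \<and> refines u v \<longrightarrow> v \<in> \<U>) \<and>
     (\<forall>u\<in>\<U>. \<forall>v\<in>\<U>. \<exists>w\<in>\<U>. refines w u \<and> refines w v) \<and>
     (\<forall>u\<in>\<U>. \<exists>v\<in>\<U>. star_refines v u) \<and>
     (\<forall>W x. openin X W \<and> x \<in> W \<longrightarrow> (\<exists>u\<in>\<U>. cover_star {x} u \<subseteq> W))"

definition uniformity_base :: "'a set set set \<Rightarrow> 'a set set set \<Rightarrow> bool" where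
  "uniformity_base \<U> \<B> \<longleftrightarrow> \<B> \<subseteq> \<U> \<and> (\<forall>u\<in>\<U>. \<exists>v\<in>\<B>. refines v u)"

definition uniform_weight_le :: "'a set set set \<Rightarrow> 'k set \<Rightarrow> bool" where
  "uniform_weight_le \<U> T \<longleftrightarrow> (\<exists>\<B>. uniformity_base \<U> \<B> \<and> \<B> \<lesssim> T)"

definition topological_group :: "('g, 'b) monoid_scheme \<Rightarrow> 'g topology \<Rightarrow> bool" where
  "topological_group G TG \<longleftrightarrow>
     group G \<and> topspace TG = carrier G \<and>
     continuous_map (prod_topology TG TG) TG (\<lambda>(x, y). x \<otimes>\<^bsub>G\<^esub> y) \<and>
     continuous_map TG TG (\<lambda>x. inv\<^bsub>G\<^esub> x)"

definition pseudochar_at_le :: "'a topology \<Rightarrow> 'a \<Rightarrow> 'k set \<Rightarrow> bool" where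
  "pseudochar_at_le Y x T \<longleftrightarrow>
     (\<exists>F. F \<lesssim> T \<and> (\<forall>U\<in>F. openin Y U \<and> x \<in> U) \<and> topspace Y \<inter> \<Inter>F = {x})"

text \<open>psi(Y) = sup of psi(x, Y) over x; psi(Y) \<le> |T| (T infinite)\<close>
definition pseudochar_le :: "'a topology \<Rightarrow> 'k set \<Rightarrow> bool" where
  "pseudochar_le Y T \<longleftrightarrow> (\<forall>x\<in>topspace Y. pseudochar_at_le Y x T)"

definition continuous_action ::
  "('g, 'b) monoid_scheme \<Rightarrow> 'g topology \<Rightarrow> 'a topology \<Rightarrow> ('g \<Rightarrow> 'a \<Rightarrow> 'a) \<Rightarrow> bool" where
  "continuous_action G TG X act \<longleftrightarrow>
     (\<forall>g\<in>carrier G. \<forall>x\<in>topspace X. act g x \<in> topspace X) \<and>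
     (\<forall>x\<in>topspace X. act \<one>\<^bsub>G\<^esub> x = x) \<and>
     (\<forall>g\<in>carrier G. \<forall>h\<in>carrier G. \<forall>x\<in>topspace X. act g (act h x) = act (g \<otimes>\<^bsub>G\<^esub> h) x) \<and>
     continuous_map (prod_topology TG X) X (\<lambda>(g, x). act g x)"

definition effective_action :: "('g, 'b) monoid_scheme \<Rightarrow> 'a topology \<Rightarrow> ('g \<Rightarrow> 'a \<Rightarrow> 'a) \<Rightarrow> bool" where
  "effective_action G X act \<longleftrightarrow>
     (\<forall>g\<in>carrier G. (\<forall>x\<in>topspace X. act g x = x) \<longrightarrow> g = \<one>\<^bsub>G\<^esub>)"

definition act_set :: "('g \<Rightarrow> 'a \<Rightarrow> 'a) \<Rightarrow> 'g set \<Rightarrow> 'a set \<Rightarrow> 'a set" where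
  "act_set act N V = {act g x | g x. g \<in> N \<and> x \<in> V}"

definition equiuniformity ::
  "('g, 'b) monoid_scheme \<Rightarrow> 'g topology \<Rightarrow> 'a topology \<Rightarrow> ('g \<Rightarrow> 'a \<Rightarrow> 'a) \<Rightarrow> 'a set set set \<Rightarrow> bool" where
  "equiuniformity G TG X act \<U> \<longleftrightarrow>
     cover_uniformity X \<U> \<and>
     (\<forall>g\<in>carrier G. \<forall>u\<in>\<U>. (\<lambda>U. act g ` U) ` u \<in> \<U>) \<and>
     (\<forall>u\<in>\<U>. \<exists>N v. openin TG N \<and> \<one>\<^bsub>G\<^esub> \<in> N \<and> v \<in> \<U> \<and>
                   refines ((\<lambda>V. act_set act N V) ` v) u)"

end

theory Submission
  imports Defs
begin

lemma key_fix:
  assumes tych: "tychonoff_space X"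
    and cu: "cover_uniformity X \<U>"
    and base: "uniformity_base \<U> \<B>"
    and ca: "continuous_action G TG X act"
    and eff: "effective_action G X act"
    and Nv: "\<forall>b\<in>\<B>. \<one>\<^bsub>G\<^esub> \<in> N b \<and> v b \<in> \<U> \<and> refines ((\<lambda>V. act_set act (N b) V) ` v b) b"
    and k: "k \<in> carrier G" "\<forall>b\<in>\<B>. k \<in> N b"
  shows "k = \<one>\<^bsub>G\<^esub>"
proof -
  have cu_oc: "\<forall>u\<in>\<U>. open_cover X u" using cu by (simp add: cover_uniformity_def)
  have cu_nb: "\<forall>W x. openin X W \<and> x \<in> W \<longrightarrow> (\<exists>u\<in>\<U>. cover_star {x} u \<subseteq> W)"
    using cu by (simp add: cover_uniformity_def)
  have bref: "\<forall>u\<in>\<U>. \<exists>v\<in>\<B>. refines v u" using base by (simp add: uniformity_base_def)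
  have cl: "\<forall>g\<in>carrier G. \<forall>x\<in>topspace X. act g x \<in> topspace X"
    using ca by (simp add: continuous_action_def)
  have one: "\<forall>x\<in>topspace X. act \<one>\<^bsub>G\<^esub> x = x"
    using ca by (simp add: continuous_action_def)
  have t1: "t1_space X" using tych by (simp add: tychonoff_space_def)
  have "\<forall>x\<in>topspace X. act k x = x"
  proof (rule ccontr)
    assume "\<not> (\<forall>x\<in>topspace X. act k x = x)"
    then obtain x where x: "x \<in> topspace X" "act k x \<noteq> x" by blast
    have kx: "act k x \<in> topspace X" using cl x(1) k(1) by blast
    have ne: "x \<noteq> act k x" using x(2) by simp
    have "\<exists>W. openin X W \<and> x \<in> W \<and> act k x \<notin> W"
      using t1 x(1) kx ne unfolding t1_space_def by blast
    then obtain W where W: "openin X W" "x \<in> W" "act k x \<notin> W" by blast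
    have "\<exists>u\<in>\<U>. cover_star {x} u \<subseteq> W" using cu_nb W(1,2) by blast
    then obtain u where u: "u \<in> \<U>" "cover_star {x} u \<subseteq> W" by blast
    have "\<exists>b\<in>\<B>. refines b u" using bref u(1) by blast
    then obtain b where b: "b \<in> \<B>" "refines b u" by blast
    have Nb: "\<one>\<^bsub>G\<^esub> \<in> N b" "v b \<in> \<U>" "refines ((\<lambda>V. act_set act (N b) V) ` v b) b"
      using Nv b(1) by auto
    have "open_cover X (v b)" using cu_oc Nb(2) by blast
    then have "\<Union>(v b) = topspace X" by (simp add: open_cover_def)
    then obtain V where V: "V \<in> v b" "x \<in> V" using x(1) by blast
    have "\<exists>U1\<in>b. act_set act (N b) V \<subseteq> U1"
      using Nb(3) V(1) unfolding refines_def by blast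
    then obtain U1 where U1: "U1 \<in> b" "act_set act (N b) V \<subseteq> U1" by blast
    have "\<exists>U2\<in>u. U1 \<subseteq> U2" using b(2) U1(1) unfolding refines_def by blast
    then obtain U2 where U2: "U2 \<in> u" "U1 \<subseteq> U2" by blast
    have "act k x \<in> act_set act (N b) V" unfolding act_set_def using k(2) b(1) V(2) by blast
    moreover have "act \<one>\<^bsub>G\<^esub> x \<in> act_set act (N b) V" unfolding act_set_def
      using Nb(1) V(2) by blast
    moreover have "act \<one>\<^bsub>G\<^esub> x = x" using one x(1) by blast
    ultimately have "act k x \<in> U2" "x \<in> U2" using U1(2) U2(2) by auto
    then have "act k x \<in> cover_star {x} u" unfolding cover_star_def using U2(1) by blast
    then show False using u(2) W(3) by blast
  qed
  then show ?thesis using eff k(1) unfolding effective_action_def by blast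
qed

theorem corollary3p13:
  fixes T :: "'k set" and X :: "'a topology" and \<U> :: "'a set set set"
  assumes "infinite T"
    and "tychonoff_space X"
    and "cover_uniformity X \<U>"
    and "uniform_weight_le \<U> T"
  shows "\<not> (\<exists>(G :: 'g monoid) TG act.
             topological_group G TG \<and> tychonoff_space TG \<and>
             continuous_action G TG X act \<and> effective_action G X act \<and>
             \<not> pseudochar_le TG T \<and>
             equiuniformity G TG X act \<U>)"
proof
  assume "\<exists>(G :: 'g monoid) TG act.
             topological_group G TG \<and> tychonoff_space TG \<and>
             continuous_action G TG X act \<and> effective_action G X act \<and>
             \<not> pseudochar_le TG T \<and>
             equiuniformity G TG X act \<U>"
  then obtain G :: "'g monoid" and TG act where
    tg: "topological_group G TG" and ca: "continuous_action G TG X act"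
    and eff: "effective_action G X act" and np: "\<not> pseudochar_le TG T"
    and eq: "equiuniformity G TG X act \<U>" by blast
  obtain \<B> where base: "uniformity_base \<U> \<B>" and BT: "\<B> \<lesssim> T"
    using assms(4) unfolding uniform_weight_le_def by blast
  have eqb: "\<forall>u\<in>\<U>. \<exists>N v. openin TG N \<and> \<one>\<^bsub>G\<^esub> \<in> N \<and> v \<in> \<U> \<and>
                   refines ((\<lambda>V. act_set act N V) ` v) u"
    using eq by (simp add: equiuniformity_def)
  have BU: "\<B> \<subseteq> \<U>" using base by (simp add: uniformity_base_def)
  have "\<forall>b\<in>\<B>. \<exists>N v. openin TG N \<and> \<one>\<^bsub>G\<^esub> \<in> N \<and> v \<in> \<U> \<and>
                   refines ((\<lambda>V. act_set act N V) ` v) b"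
    using eqb BU by blast
  then obtain N v where Nv0: "\<forall>b\<in>\<B>. openin TG (N b) \<and> \<one>\<^bsub>G\<^esub> \<in> N b \<and> v b \<in> \<U> \<and>
                   refines ((\<lambda>V. act_set act (N b) V) ` v b) b" by metis
  have grp: "group G" and top: "topspace TG = carrier G"
    and mc: "continuous_map (prod_topology TG TG) TG (\<lambda>(x, y). x \<otimes>\<^bsub>G\<^esub> y)"
    using tg unfolding topological_group_def by auto
  have "pseudochar_le TG T" unfolding pseudochar_le_def pseudochar_at_le_def
  proof
    fix h assume h: "h \<in> topspace TG"
    hence hc: "h \<in> carrier G" using top by simp
    define P where "P = (\<lambda>M. {g \<in> topspace TG. inv\<^bsub>G\<^esub> h \<otimes>\<^bsub>G\<^esub> g \<in> M})"
    have cont: "continuous_map TG TG (\<lambda>g. inv\<^bsub>G\<^esub> h \<otimes>\<^bsub>G\<^esub> g)"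
    proof -
      have "continuous_map TG (prod_topology TG TG) (\<lambda>g. (inv\<^bsub>G\<^esub> h, g))"
        using hc top grp by (intro continuous_map_pairedI) (auto simp: group.inv_closed)
      from continuous_map_compose[OF this mc] show ?thesis by (simp add: o_def)
    qed
    have Popen: "openin TG (P M)" if "openin TG M" for M
      unfolding P_def using openin_continuous_map_preimage[OF cont that] by simp
    show "\<exists>F. F \<lesssim> T \<and> (\<forall>U\<in>F. openin TG U \<and> h \<in> U) \<and> topspace TG \<inter> \<Inter> F = {h}"
    proof (intro exI conjI)
      show "(\<lambda>b. P (N b)) ` \<B> \<lesssim> T" using image_lepoll BT lepoll_trans by blast
      show "\<forall>U\<in>(\<lambda>b. P (N b)) ` \<B>. openin TG U \<and> h \<in> U"
        using Nv0 Popen h hc grp unfolding P_def by (auto simp: group.l_inv)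
      show "topspace TG \<inter> \<Inter> ((\<lambda>b. P (N b)) ` \<B>) = {h}"
      proof
        show "{h} \<subseteq> topspace TG \<inter> \<Inter> ((\<lambda>b. P (N b)) ` \<B>)"
          using Nv0 h hc grp unfolding P_def by (auto simp: group.l_inv)
      next
        show "topspace TG \<inter> \<Inter> ((\<lambda>b. P (N b)) ` \<B>) \<subseteq> {h}"
        proof
          fix g assume g: "g \<in> topspace TG \<inter> \<Inter> ((\<lambda>b. P (N b)) ` \<B>)"
          hence gc: "g \<in> carrier G" using top by auto
          let ?k = "inv\<^bsub>G\<^esub> h \<otimes>\<^bsub>G\<^esub> g"
          have kc: "?k \<in> carrier G" using gc hc grp by (simp add: group.inv_closed monoid.m_closed group.is_monoid)
          have "\<forall>b\<in>\<B>. ?k \<in> N b" using g unfolding P_def by auto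
          hence "?k = \<one>\<^bsub>G\<^esub>"
            using key_fix[OF assms(2) assms(3) base ca eff _ kc, of N v] Nv0 by blast
          hence "g = h" using gc hc grp
            using group.inv_solve_left'[OF grp monoid.one_closed[OF group.is_monoid[OF grp]] hc gc]
            by (simp add: monoid.r_one[OF group.is_monoid[OF grp] hc])
          thus "g \<in> {h}" by simp
        qed
      qed
    qed
  qed
  with np show False by contradiction
qed

end
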